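(* Let $k\ge 1$ and let $\zeta_1,\dots,\zeta_k>-1$ and $\alpha_1,\dots,\alpha_k>0$ be real. Let $x_1,\dots,x_k$ be mutually independent real random variables, $x_j$ having the type-1 beta density $$f_j(x_j)=\frac{\Gamma(\alpha_j+\zeta_j+1)}{\Gamma(\alpha_j)\Gamma(\zeta_j+1)}x_j^{\zeta_j}(1-x_j)^{\alpha_j-1},\quad 0<x_j<1,$$ and $f_j=0$ elsewhere. Let $(v_1,\dots,v_k)$ be a random vector of positive real random variables with an arbitrary joint density $f(v_1,\dots,v_k)$ on $(0,\infty)^k$, and assume $(x_1,\dots,x_k)$ and $(v_1,\dots,v_k)$ are independent. Put $u_j=x_jv_j$, $j=1,\dots,k$, and let $g(u_1,\dots,u_k)$ denote the joint density of $(u_1,\dots,u_k)$. Then, for (almost every) $(u_1,\dots,u_k)\in(0,\infty)^k$, $$\Big\{\prod_{j=1}^k\frac{\Gamma(\zeta_j+1)}{\Gamma(\alpha_j+\zeta_j+1)}\Big\}\,g(u_1,\dots,u_k)=K_{u_j,j=1,\dots,k}^{(\zeta_j,\alpha_j),j=1,\dots,k}f(u_1,\dots,u_k).$$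
   Context: The multivariable Kober fractional integral operator of the second kind is defined by $$K_{u_j,j=1,\dots,k}^{(\zeta_j,\alpha_j),j=1,\dots,k}f(u_1,\dots,u_k)=\Big\{\prod_{j=1}^k\frac{u_j^{\zeta_j}}{\Gamma(\alpha_j)}\Big\}\int_{v_1>u_1}\cdots\int_{v_k>u_k}\Big\{\prod_{j=1}^k(v_j-u_j)^{\alpha_j-1}v_j^{-\zeta_j-\alpha_j}\Big\}f(v_1,\dots,v_k)\,dv_1\cdots dv_k.$$ *)

theory Defs
  imports "HOL-Probability.Probability"
begin

definition beta1_density :: "real \<Rightarrow> real \<Rightarrow> real \<Rightarrow> real" where
  "beta1_density \<zeta> \<alpha> t =
     (if 0 < t \<and> t < 1
      then Gamma (\<alpha> + \<zeta> + 1) / (Gamma \<alpha> * Gamma (\<zeta> + 1)) * t powr \<zeta> * (1 - t) powr (\<alpha> - 1)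
      else 0)"

text \<open>Multivariable Kober fractional integral operator of the second kind on
  functions of k real variables (points of R^k represented as extensional functions on {..<k}).\<close>
definition kober2 :: "nat \<Rightarrow> (nat \<Rightarrow> real) \<Rightarrow> (nat \<Rightarrow> real) \<Rightarrow> ((nat \<Rightarrow> real) \<Rightarrow> ennreal)
    \<Rightarrow> (nat \<Rightarrow> real) \<Rightarrow> ennreal" where
  "kober2 k \<zeta> \<alpha> f u =
     ennreal (\<Prod>j<k. u j powr \<zeta> j / Gamma (\<alpha> j)) *
     (\<integral>\<^sup>+ v. indicator {v. \<forall>j<k. u j < v j} v *
         ennreal (\<Prod>j<k. (v j - u j) powr (\<alpha> j - 1) * v j powr (- \<zeta> j - \<alpha> j)) * f v
       \<partial>(PiM {..<k} (\<lambda>_. lborel)))"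

end

theory Submission
  imports Defs
begin

lemma L1:
  fixes b :: "real \<Rightarrow> real" and c :: real
  assumes [measurable]: "b \<in> borel_measurable borel" and c: "c > 0" and [measurable]: "A \<in> sets borel"
  shows "(\<integral>\<^sup>+ t. ennreal (b t) * indicator A (t * c) \<partial>lborel) =
         (\<integral>\<^sup>+ u. ennreal (b (u / c) / c) * indicator A u \<partial>lborel)"
proof -
  have "(\<integral>\<^sup>+ t. ennreal (b t) * indicator A (t * c) \<partial>lborel) =
     ennreal \<bar>1/c\<bar> * (\<integral>\<^sup>+ u. ennreal (b (0 + 1/c * u)) * indicator A ((0 + 1/c * u) * c) \<partial>lborel)"
    by (rule nn_integral_real_affine) (use c in auto)
  also have "\<dots> = (\<integral>\<^sup>+ u. ennreal (1/c) * (ennreal (b (u / c)) * indicator A u) \<partial>lborel)"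
    using c by (subst nn_integral_cmult) (auto simp: field_simps)
  also have "\<dots> = (\<integral>\<^sup>+ u. ennreal (b (u / c) / c) * indicator A u \<partial>lborel)"
    using c by (intro nn_integral_cong) (simp add: ennreal_mult' divide_inverse ac_simps)
  finally show ?thesis .
qed

lemma L2:
  fixes I :: "nat set" and P :: "nat \<Rightarrow> real measure" and b :: "nat \<Rightarrow> real \<Rightarrow> real" and v :: "nat \<Rightarrow> real"
  assumes fin: "finite I" and Pp: "\<And>i. prob_space (P i)"
    and Pd: "\<And>i. i \<in> I \<Longrightarrow> P i = density lborel (\<lambda>t. ennreal (b i t))"
    and bm: "\<And>i. i \<in> I \<Longrightarrow> b i \<in> borel_measurable borel"
    and vp: "\<And>i. i \<in> I \<Longrightarrow> v i > 0"
  shows "distr (PiM I P) (PiM I (\<lambda>_. lborel)) (\<lambda>x. \<lambda>j\<in>I. x j * v j) =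
         density (PiM I (\<lambda>_. lborel)) (\<lambda>u. \<Prod>j\<in>I. ennreal (b j (u j / v j) / v j))"
proof -
  interpret PP: product_prob_space P I
    using Pp by (simp add: product_prob_space_def product_prob_space_axioms_def product_sigma_finite_def prob_space_imp_sigma_finite)
  interpret LB: product_sigma_finite "\<lambda>_::nat. lborel :: real measure"
    by (simp add: product_sigma_finite_def lborel.sigma_finite_measure_axioms)
  have setsP: "\<And>i. i \<in> I \<Longrightarrow> sets (P i) = sets borel" using Pd by simp
  have spP: "\<And>i. i \<in> I \<Longrightarrow> space (P i) = UNIV" using Pd by simp
  have sPI: "sets (PiM I P) = sets (PiM I (\<lambda>_. lborel))"
    by (rule sets_PiM_cong) (auto simp: setsP)
  have meas: "(\<lambda>x. \<lambda>j\<in>I. x j * v j) \<in> PiM I P \<rightarrow>\<^sub>M PiM I (\<lambda>_. lborel)"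
    unfolding measurable_cong_sets[OF sPI refl]
    by measurable
  show ?thesis
  proof (rule measure_eqI_PiM_finite[where M="\<lambda>_. lborel" and I=I])
    show "finite I" by fact
    show "sets (distr (PiM I P) (PiM I (\<lambda>_. lborel)) (\<lambda>x. \<lambda>j\<in>I. x j * v j)) = sets (PiM I (\<lambda>_. lborel))"
      by simp
    show "sets (density (PiM I (\<lambda>_. lborel)) (\<lambda>u. \<Prod>j\<in>I. ennreal (b j (u j / v j) / v j))) = sets (PiM I (\<lambda>_. lborel))"
      by simp
  next
    fix A assume A: "\<And>i. i \<in> I \<Longrightarrow> A i \<in> sets (lborel :: real measure)"
    have pre: "(\<lambda>x. \<lambda>j\<in>I. x j * v j) -` PiE I A \<inter> space (PiM I P) = PiE I (\<lambda>j. (\<lambda>t. t * v j) -` A j)"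
      by (auto simp: space_PiM spP PiE_iff)
    have "emeasure (distr (PiM I P) (PiM I (\<lambda>_. lborel)) (\<lambda>x. \<lambda>j\<in>I. x j * v j)) (PiE I A)
        = emeasure (PiM I P) (PiE I (\<lambda>j. (\<lambda>t. t * v j) -` A j))"
      using A by (subst emeasure_distr[OF meas]) (auto simp: pre intro!: sets_PiM_I_finite fin)
    also have "\<dots> = (\<Prod>j\<in>I. emeasure (P j) ((\<lambda>t. t * v j) -` A j))"
      using A measurable_sets_borel[of "\<lambda>t. t * v _" borel "A _"] by (intro PP.emeasure_PiM fin) (auto simp: setsP)
    also have "\<dots> = (\<Prod>j\<in>I. \<integral>\<^sup>+ u. ennreal (b j (u / v j) / v j) * indicator (A j) u \<partial>lborel)"
    proof (rule prod.cong[OF refl])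
      fix j assume j: "j \<in> I"
      note [measurable] = bm[OF j]
      have [measurable]: "A j \<in> sets borel" using A j by simp
      have [measurable]: "(\<lambda>t. t * v j) -` A j \<in> sets borel"
        by (rule measurable_sets_borel[of _ borel]) auto
      have "emeasure (P j) ((\<lambda>t. t * v j) -` A j) = (\<integral>\<^sup>+ t. ennreal (b j t) * indicator (A j) (t * v j) \<partial>lborel)"
        unfolding Pd[OF j] by (subst emeasure_density) (auto intro!: nn_integral_cong simp: indicator_def)
      also have "\<dots> = (\<integral>\<^sup>+ u. ennreal (b j (u / v j) / v j) * indicator (A j) u \<partial>lborel)"
        by (rule L1) (use vp[OF j] in auto)
      finally show "emeasure (P j) ((\<lambda>t. t * v j) -` A j) = \<dots>" .
    qed
    also have "\<dots> = (\<integral>\<^sup>+ u. (\<Prod>j\<in>I. ennreal (b j (u j / v j) / v j) * indicator (A j) (u j)) \<partial>PiM I (\<lambda>_. lborel))"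
      using A bm by (subst LB.product_nn_integral_prod) (auto intro!: fin)
    also have "\<dots> = emeasure (density (PiM I (\<lambda>_. lborel)) (\<lambda>u. \<Prod>j\<in>I. ennreal (b j (u j / v j) / v j))) (PiE I A)"
      using A bm
      by (subst emeasure_density)
         (auto intro!: sets_PiM_I_finite fin nn_integral_cong simp: prod.distrib indicator_def space_PiM PiE_iff)
    finally show "emeasure (distr (PiM I P) (PiM I (\<lambda>_. lborel)) (\<lambda>x. \<lambda>j\<in>I. x j * v j)) (PiE I A) =
      emeasure (density (PiM I (\<lambda>_. lborel)) (\<lambda>u. \<Prod>j\<in>I. ennreal (b j (u j / v j) / v j))) (PiE I A)" .
  next
    define C where "C n = PiE I (\<lambda>_::nat. {-real n..real n})" for n :: nat
    show "range C \<subseteq> prod_algebra I (\<lambda>_. lborel)"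
      by (auto simp: C_def intro!: prod_algebraI_finite fin)
    show "(\<Union>n. C n) = space (PiM I (\<lambda>_. lborel))"
    proof safe
      fix x assume "x \<in> space (PiM I (\<lambda>_::nat. lborel :: real measure))"
      hence x: "x \<in> PiE I (\<lambda>_. UNIV)" by (simp add: space_PiM)
      obtain n :: nat where n: "(\<Sum>j\<in>I. \<bar>x j\<bar>) \<le> real n" using real_arch_simple by blast
      have "\<And>j. j \<in> I \<Longrightarrow> \<bar>x j\<bar> \<le> real n"
        using n member_le_sum[of _ I "\<lambda>j. \<bar>x j\<bar>"] fin by force
      hence "x \<in> C n" using x by (force simp: C_def PiE_iff abs_le_iff)
      thus "x \<in> (\<Union>n. C n)" by blast
    qed (auto simp: C_def space_PiM PiE_iff)
    interpret D: prob_space "distr (PiM I P) (PiM I (\<lambda>_. lborel)) (\<lambda>x. \<lambda>j\<in>I. x j * v j)"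
      by (intro prob_space.prob_space_distr meas prob_space_PiM Pp)
    show "\<And>n. emeasure (distr (PiM I P) (PiM I (\<lambda>_. lborel)) (\<lambda>x. \<lambda>j\<in>I. x j * v j)) (C n) \<noteq> \<infinity>"
      by (simp add: D.emeasure_eq_measure)
  qed
qed
lemma fac:
  fixes z a u v :: real
  assumes z: "z > -1" and a: "a > 0" and u: "0 < u" and uv: "u < v"
  shows "Gamma (z + 1) / Gamma (a + z + 1) * (beta1_density z a (u / v) / v)
       = u powr z / Gamma a * ((v - u) powr (a - 1) * v powr (- z - a))"
proof -
  have v: "v > 0" using u uv by simp
  have t: "0 < u / v" "u / v < 1" using u v uv by (auto simp: field_simps)
  have g1: "Gamma (z+1) > 0" "Gamma (a+z+1) > 0" "Gamma a > 0" using z a by (auto intro!: Gamma_real_pos)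
  have e1: "1 - u / v = (v - u) / v" using v by (simp add: field_simps)
  have eq1: "beta1_density z a (u / v) / v = Gamma (a + z + 1) / (Gamma a * Gamma (z + 1)) * (u powr z / v powr z) * ((v - u) powr (a - 1) / v powr (a - 1)) / v"
    using t u v uv by (simp add: beta1_density_def e1 powr_divide)
  moreover have eq2: "v powr (- z - a) = 1 / (v powr z * v powr (a - 1) * v)"
  proof -
    have "v powr (z + (a - 1) + 1) = v powr z * v powr (a - 1) * v powr 1"
      by (simp only: powr_add)
    hence h: "v powr z * v powr (a - 1) * v = v powr (z + a)"
      using v by simp
    have e: "- z - a = - (z + a)" by simp
    have "v powr (- z - a) = inverse (v powr (z + a))" unfolding e by (rule powr_minus)
    thus ?thesis using h by (simp add: divide_inverse)
  qed
  ultimately show ?thesis unfolding eq1 eq2 using g1 v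
    by (simp add: field_simps powr_gt_zero)
qed

lemma bd_meas[measurable]: "beta1_density z a \<in> borel_measurable borel"
  unfolding beta1_density_def by measurable

lemma bd_nonneg: "z > -1 \<Longrightarrow> a > 0 \<Longrightarrow> beta1_density z a t \<ge> 0"
  unfolding beta1_density_def by (auto intro!: mult_nonneg_nonneg divide_nonneg_nonneg Gamma_real_pos less_imp_le)

lemma L3:
  fixes k :: nat and \<zeta> \<alpha> u :: "nat \<Rightarrow> real" and f :: "(nat \<Rightarrow> real) \<Rightarrow> ennreal"
  assumes z: "\<And>j. j < k \<Longrightarrow> \<zeta> j > -1" and a: "\<And>j. j < k \<Longrightarrow> \<alpha> j > 0"
    and u: "\<forall>j<k. u j > 0"
    and fm[measurable]: "f \<in> borel_measurable (PiM {..<k} (\<lambda>_. lborel))"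
  shows "ennreal (\<Prod>j<k. Gamma (\<zeta> j + 1) / Gamma (\<alpha> j + \<zeta> j + 1)) *
      (\<integral>\<^sup>+ v. f v * (\<Prod>j<k. ennreal (beta1_density (\<zeta> j) (\<alpha> j) (u j / v j) / v j)) \<partial>PiM {..<k} (\<lambda>_. lborel))
    = kober2 k \<zeta> \<alpha> f u"
proof -
  let ?c = "\<Prod>j<k. Gamma (\<zeta> j + 1) / Gamma (\<alpha> j + \<zeta> j + 1)"
  let ?K = "\<Prod>j<k. u j powr \<zeta> j / Gamma (\<alpha> j)"
  let ?Q = "\<lambda>v. \<Prod>j<k. (v j - u j) powr (\<alpha> j - 1) * v j powr (- \<zeta> j - \<alpha> j)"
  let ?H = "\<lambda>v. \<Prod>j<k. ennreal (beta1_density (\<zeta> j) (\<alpha> j) (u j / v j) / v j)"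
  have key: "ennreal ?c * ?H v = ennreal ?K * (indicator {v. \<forall>j<k. u j < v j} v * ennreal (?Q v))" for v
  proof (cases "\<forall>j<k. u j < v j")
    case True
    have nn: "0 \<le> beta1_density (\<zeta> j) (\<alpha> j) (u j / v j) / v j" if "j < k" for j
      using True u that bd_nonneg[OF z a] by (meson divide_nonneg_pos less_trans that)
    have "ennreal ?c * ?H v = ennreal ?c * ennreal (\<Prod>j<k. beta1_density (\<zeta> j) (\<alpha> j) (u j / v j) / v j)"
      using nn by (subst prod_ennreal) auto
    also have "\<dots> = ennreal (?c * (\<Prod>j<k. beta1_density (\<zeta> j) (\<alpha> j) (u j / v j) / v j))"
    proof -
      have "?c > 0"
      proof (intro prod_pos ballI divide_pos_pos Gamma_real_pos)
        fix j assume "j \<in> {..<k}"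
        thus "0 < \<zeta> j + 1" "0 < \<alpha> j + \<zeta> j + 1" using z[of j] a[of j] by auto
      qed
      hence c0: "?c \<ge> 0" by simp
      have p0: "(\<Prod>j<k. beta1_density (\<zeta> j) (\<alpha> j) (u j / v j) / v j) \<ge> 0" using nn by (auto intro!: prod_nonneg)
      show ?thesis by (rule ennreal_mult[symmetric, OF c0 p0])
    qed
    also have "?c * (\<Prod>j<k. beta1_density (\<zeta> j) (\<alpha> j) (u j / v j) / v j) = ?K * ?Q v"
      unfolding prod.distrib[symmetric]
      by (intro prod.cong refl fac) (use z a u True in auto)
    also have "ennreal (?K * ?Q v) = ennreal ?K * ennreal (?Q v)"
      using u True a by (intro ennreal_mult prod_nonneg) (auto intro!: mult_nonneg_nonneg divide_nonneg_nonneg less_imp_le Gamma_real_pos)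
    finally show ?thesis using True by simp
  next
    case False
    then obtain j where j: "j < k" "\<not> u j < v j" by blast
    have "beta1_density (\<zeta> j) (\<alpha> j) (u j / v j) = 0"
    proof -
      have "\<not> (0 < u j / v j \<and> u j / v j < 1)"
      proof
        assume h: "0 < u j / v j \<and> u j / v j < 1"
        have uj: "u j > 0" using u j by auto
        hence "v j > 0" using h by (auto simp: zero_less_divide_iff)
        thus False using h j by (auto simp: divide_less_eq)
      qed
      thus ?thesis unfolding beta1_density_def by (simp only: if_False)
    qed
    hence "?H v = 0" using j by (intro prod_zero bexI[of _ j]) auto
    thus ?thesis using False by simp
  qed
  have "ennreal ?c * (\<integral>\<^sup>+ v. f v * ?H v \<partial>PiM {..<k} (\<lambda>_. lborel))
      = (\<integral>\<^sup>+ v. ennreal ?c * (f v * ?H v) \<partial>PiM {..<k} (\<lambda>_. lborel))"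
    by (rule nn_integral_cmult[symmetric]) measurable
  also have "\<dots> = (\<integral>\<^sup>+ v. ennreal ?K * (indicator {v. \<forall>j<k. u j < v j} v * ennreal (?Q v) * f v) \<partial>PiM {..<k} (\<lambda>_. lborel))"
    by (intro nn_integral_cong) (metis (no_types, lifting) key mult.assoc mult.commute mult.left_commute)
  also have "\<dots> = kober2 k \<zeta> \<alpha> f u"
    unfolding kober2_def by (rule nn_integral_cmult) measurable
  finally show ?thesis .
qed

theorem theorem1p1:
  fixes M :: "'a measure" and k :: nat
    and \<zeta> \<alpha> :: "nat \<Rightarrow> real"
    and X V :: "nat \<Rightarrow> 'a \<Rightarrow> real"
    and f g :: "(nat \<Rightarrow> real) \<Rightarrow> ennreal"
  assumes "prob_space M"
    and "k \<ge> 1"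
    and "\<And>j. j < k \<Longrightarrow> \<zeta> j > -1"
    and "\<And>j. j < k \<Longrightarrow> \<alpha> j > 0"
    and "\<And>j. j < k \<Longrightarrow> distributed M lborel (X j) (\<lambda>t. ennreal (beta1_density (\<zeta> j) (\<alpha> j) t))"
    and "prob_space.indep_vars M (\<lambda>_. borel) X {..<k}"
    and "distributed M (PiM {..<k} (\<lambda>_. lborel)) (\<lambda>\<omega>. \<lambda>j\<in>{..<k}. V j \<omega>) f"
    and "AE \<omega> in M. \<forall>j<k. V j \<omega> > 0"
    and "prob_space.indep_var M
           (PiM {..<k} (\<lambda>_. borel)) (\<lambda>\<omega>. \<lambda>j\<in>{..<k}. X j \<omega>)
           (PiM {..<k} (\<lambda>_. borel)) (\<lambda>\<omega>. \<lambda>j\<in>{..<k}. V j \<omega>)"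
    and "distributed M (PiM {..<k} (\<lambda>_. lborel)) (\<lambda>\<omega>. \<lambda>j\<in>{..<k}. X j \<omega> * V j \<omega>) g"
  shows "AE u in PiM {..<k} (\<lambda>_. lborel).
           (\<forall>j<k. u j > 0) \<longrightarrow>
           ennreal (\<Prod>j<k. Gamma (\<zeta> j + 1) / Gamma (\<alpha> j + \<zeta> j + 1)) * g u = kober2 k \<zeta> \<alpha> f u"
proof -
  interpret prob_space M by fact
  let ?S = "PiM {..<k} (\<lambda>_. lborel :: real measure)"
  let ?B = "PiM {..<k} (\<lambda>_. borel :: real measure)"
  let ?Xv = "\<lambda>\<omega>. \<lambda>j\<in>{..<k}. X j \<omega>"
  let ?Vv = "\<lambda>\<omega>. \<lambda>j\<in>{..<k}. V j \<omega>"
  let ?U = "\<lambda>\<omega>. \<lambda>j\<in>{..<k}. X j \<omega> * V j \<omega>"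
  have sSB: "sets ?S = sets ?B" by (rule sets_PiM_cong) auto
  interpret LB: product_sigma_finite "\<lambda>_::nat. lborel :: real measure"
    by (simp add: product_sigma_finite_def lborel.sigma_finite_measure_axioms)
  have sfS: "sigma_finite_measure ?S" by (rule LB.sigma_finite) simp
  interpret SS: pair_sigma_finite ?S ?S
    using sfS by (simp add: pair_sigma_finite_def)
  have Xm: "X j \<in> borel_measurable M" if "j < k" for j
    using distributed_measurable[OF assms(5)[OF that]] by simp
  have Vvm: "?Vv \<in> M \<rightarrow>\<^sub>M ?S" using distributed_measurable[OF assms(7)] .
  have Vm: "V j \<in> borel_measurable M" if "j < k" for j
  proof -
    have "(\<lambda>\<omega>. ?Vv \<omega> j) \<in> M \<rightarrow>\<^sub>M lborel"
      by (rule measurable_compose[OF Vvm measurable_component_singleton]) (use that in simp)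
    thus ?thesis using that by simp
  qed
  have fm[measurable]: "f \<in> borel_measurable ?S" using distributed_borel_measurable[OF assms(7)] .
  have Xvm: "?Xv \<in> M \<rightarrow>\<^sub>M ?B" by (rule measurable_restrict) (auto intro: Xm)
  have VvmB: "?Vv \<in> M \<rightarrow>\<^sub>M ?B" by (rule measurable_restrict) (auto intro: Vm)
  have Um: "?U \<in> M \<rightarrow>\<^sub>M ?S" by (rule measurable_restrict) (auto intro!: borel_measurable_times Xm Vm)

  define X' where "X' j = (if j < k then X j else (\<lambda>_. 0::real))" for j
  have X'm: "random_variable borel (X' j)" for j
    by (cases "j < k") (auto simp: X'_def intro: Xm)
  have ind': "indep_vars (\<lambda>_. borel) X' {..<k}"
    using assms(6) by (subst indep_vars_cong[of "{..<k}" "{..<k}" X' X]) (auto simp: X'_def)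
  have ne: "{..<k} \<noteq> {}" using assms(2) by (auto simp: lessThan_empty_iff)
  define P where "P j = distr M borel (X' j)" for j
  have PXeq: "distr M ?B ?Xv = PiM {..<k} P"
  proof -
    have "distr M ?B (\<lambda>x. \<lambda>i\<in>{..<k}. X' i x) = PiM {..<k} P"
      unfolding P_def using indep_vars_iff_distr_eq_PiM[where I="{..<k}" and M'="\<lambda>_. borel" and X=X'] ne X'm ind' by blast
    moreover have "(\<lambda>x. \<lambda>i\<in>{..<k}. X' i x) = ?Xv" by (auto simp: X'_def fun_eq_iff)
    ultimately show ?thesis by simp
  qed
  have Pp: "prob_space (P j)" for j unfolding P_def by (rule prob_space_distr[OF X'm])
  have Pd: "P j = density lborel (\<lambda>t. ennreal (beta1_density (\<zeta> j) (\<alpha> j) t))" if "j \<in> {..<k}" for j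
  proof -
    have "P j = distr M lborel (X j)" unfolding P_def X'_def using that by (auto intro!: distr_cong)
    thus ?thesis using distributed_distr_eq_density[OF assms(5)] that by simp
  qed
  have joint: "distr M ?B ?Xv \<Otimes>\<^sub>M distr M ?B ?Vv = distr M (?B \<Otimes>\<^sub>M ?B) (\<lambda>\<omega>. (?Xv \<omega>, ?Vv \<omega>))"
    using indep_var_distribution_eq assms(9) by blast
  interpret PX: prob_space "distr M ?B ?Xv" by (rule prob_space_distr[OF Xvm])
  interpret PV: prob_space "distr M ?B ?Vv" by (rule prob_space_distr[OF VvmB])
  interpret PXV: pair_sigma_finite "distr M ?B ?Xv" "distr M ?B ?Vv"
    by (simp add: pair_sigma_finite_def PX.sigma_finite_measure_axioms PV.sigma_finite_measure_axioms)

  define H where "H u v = (\<Prod>j<k. ennreal (beta1_density (\<zeta> j) (\<alpha> j) (u j / v j) / v j))" for u v :: "nat \<Rightarrow> real"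
  define h where "h u = (\<integral>\<^sup>+ v. f v * H u v \<partial>?S)" for u
  have Hm[measurable]: "(\<lambda>(u, v). H u v) \<in> borel_measurable (?S \<Otimes>\<^sub>M ?S)"
    unfolding H_def by measurable
  have hm[measurable]: "h \<in> borel_measurable ?S"
    unfolding h_def by (rule sigma_finite_measure.borel_measurable_nn_integral[OF sfS]) measurable
  have Udist: "distributed M ?S ?U h"
    unfolding distributed_def
  proof (intro conjI Um hm)
    show "distr M ?S ?U = density ?S h"
    proof (rule measure_eqI)
      show "sets (distr M ?S ?U) = sets (density ?S h)" by simp
      fix A assume "A \<in> sets (distr M ?S ?U)"
      hence A[measurable]: "A \<in> sets ?S" by simp
      define mul where "mul = (\<lambda>(x, v). \<lambda>j\<in>{..<k}. (x::nat\<Rightarrow>real) j * v j)"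
      have mulm[measurable]: "mul \<in> ?B \<Otimes>\<^sub>M ?B \<rightarrow>\<^sub>M ?S"
        unfolding mul_def by measurable
      define G where "G v = (\<integral>\<^sup>+ x. indicator A (mul (x, v)) \<partial>distr M ?B ?Xv)" for v
      define G' where "G' v = (\<integral>\<^sup>+ u. H u v * indicator A u \<partial>?S)" for v
      have Gm: "G \<in> borel_measurable ?B"
        unfolding G_def by (rule PX.borel_measurable_nn_integral) measurable
      have G'm: "G' \<in> borel_measurable ?S"
        unfolding G'_def by (rule sigma_finite_measure.borel_measurable_nn_integral[OF sfS]) measurable
      have "emeasure (distr M ?S ?U) A = (\<integral>\<^sup>+ x. indicator A x \<partial>distr M ?S ?U)"
        by (simp add: A)
      also have "\<dots> = (\<integral>\<^sup>+ \<omega>. indicator A (?U \<omega>) \<partial>M)"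
        by (rule nn_integral_distr[OF Um]) simp
      also have "\<dots> = (\<integral>\<^sup>+ \<omega>. indicator A (mul (?Xv \<omega>, ?Vv \<omega>)) \<partial>M)"
        by (intro nn_integral_cong) (simp add: mul_def cong: restrict_cong)
      also have "\<dots> = (\<integral>\<^sup>+ z. indicator A (mul z) \<partial>distr M (?B \<Otimes>\<^sub>M ?B) (\<lambda>\<omega>. (?Xv \<omega>, ?Vv \<omega>)))"
        by (rule nn_integral_distr[symmetric]) (use Xvm VvmB in measurable)
      also have "\<dots> = (\<integral>\<^sup>+ z. indicator A (mul z) \<partial>(distr M ?B ?Xv \<Otimes>\<^sub>M distr M ?B ?Vv))"
        by (simp add: joint)
      also have "\<dots> = (\<integral>\<^sup>+ v. G v \<partial>distr M ?B ?Vv)"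
        unfolding G_def by (rule PXV.nn_integral_snd[symmetric]) measurable
      also have "\<dots> = (\<integral>\<^sup>+ \<omega>. G (?Vv \<omega>) \<partial>M)"
        by (rule nn_integral_distr[OF VvmB]) (use Gm in simp)
      also have "\<dots> = (\<integral>\<^sup>+ \<omega>. G' (?Vv \<omega>) \<partial>M)"
      proof (rule nn_integral_cong_AE)
        show "AE \<omega> in M. G (?Vv \<omega>) = G' (?Vv \<omega>)"
          using assms(8)
        proof eventually_elim
          case (elim \<omega>)
          let ?sc = "\<lambda>x. \<lambda>j\<in>{..<k}. x j * V j \<omega>"
          have L: "distr (PiM {..<k} P) ?S ?sc =
               density ?S (\<lambda>u. \<Prod>j\<in>{..<k}. ennreal (beta1_density (\<zeta> j) (\<alpha> j) (u j / V j \<omega>) / V j \<omega>))"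
            by (rule L2) (use Pp Pd elim in auto)
          have scm: "?sc \<in> PiM {..<k} P \<rightarrow>\<^sub>M ?S"
          proof -
            have sP: "sets (PiM {..<k} P) = sets ?S" by (rule sets_PiM_cong) (auto simp: Pd)
            show ?thesis unfolding measurable_cong_sets[OF sP refl] by measurable
          qed
          have "G (?Vv \<omega>) = (\<integral>\<^sup>+ x. indicator A (?sc x) \<partial>PiM {..<k} P)"
            unfolding G_def PXeq by (intro nn_integral_cong) (simp add: mul_def cong: restrict_cong)
          also have "\<dots> = (\<integral>\<^sup>+ u. indicator A u \<partial>distr (PiM {..<k} P) ?S ?sc)"
            by (rule nn_integral_distr[symmetric, OF scm]) simp
          also have "\<dots> = (\<integral>\<^sup>+ u. (\<Prod>j\<in>{..<k}. ennreal (beta1_density (\<zeta> j) (\<alpha> j) (u j / V j \<omega>) / V j \<omega>)) * indicator A u \<partial>?S)"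
            unfolding L by (rule nn_integral_density) measurable
          also have "\<dots> = G' (?Vv \<omega>)"
            unfolding G'_def H_def by (intro nn_integral_cong) simp
          finally show ?case .
        qed
      qed
      also have "\<dots> = (\<integral>\<^sup>+ v. G' v \<partial>distr M ?S ?Vv)"
        by (rule nn_integral_distr[symmetric, OF Vvm]) (use G'm in simp)
      also have "\<dots> = (\<integral>\<^sup>+ v. G' v \<partial>density ?S f)"
        by (simp add: distributed_distr_eq_density[OF assms(7)])
      also have "\<dots> = (\<integral>\<^sup>+ v. f v * G' v \<partial>?S)"
        by (rule nn_integral_density) (use G'm in auto)
      also have "\<dots> = (\<integral>\<^sup>+ v. \<integral>\<^sup>+ u. f v * (H u v * indicator A u) \<partial>?S \<partial>?S)"
        unfolding G'_def by (intro nn_integral_cong nn_integral_cmult[symmetric]) measurable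
      also have "\<dots> = (\<integral>\<^sup>+ u. \<integral>\<^sup>+ v. f v * (H u v * indicator A u) \<partial>?S \<partial>?S)"
        by (rule SS.Fubini') measurable
      also have "\<dots> = (\<integral>\<^sup>+ u. h u * indicator A u \<partial>?S)"
        unfolding h_def
        by (intro nn_integral_cong) (simp add: nn_integral_multc[symmetric] mult.assoc)
      also have "\<dots> = emeasure (density ?S h) A"
        by (rule emeasure_density[symmetric]) (auto simp: A)
      finally show "emeasure (distr M ?S ?U) A = emeasure (density ?S h) A" .
    qed
  qed
  have AEgh: "AE u in ?S. g u = h u"
    by (rule distributed_unique[OF assms(10) Udist])
  then show ?thesis
  proof eventually_elim
    case (elim u)
    show ?case
    proof
      assume u: "\<forall>j<k. 0 < u j"
      show "ennreal (\<Prod>j<k. Gamma (\<zeta> j + 1) / Gamma (\<alpha> j + \<zeta> j + 1)) * g u = kober2 k \<zeta> \<alpha> f u"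
        unfolding elim h_def H_def by (rule L3[OF assms(3,4) u fm])
    qed
  qed
qed
end
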